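(* Let $V$ be a finite-dimensional vector space over a field $\mathbb K$ of characteristic $\neq 2$, let $\mathcal S\subseteq V$, and let $\mathcal H\subset V$ be a linear hyperplane. Suppose that $\mathcal S'=\mathcal S\cap\mathcal H$ is a perfect subset of $\mathcal H$ and that $\mathcal S\setminus\mathcal S'$ spans $V$. Then $\mathcal S$ is perfect in $V$.
   Context: A subset $\mathcal P$ of a vector space $W$ of finite dimension $n$ over a field of characteristic $\neq2$ is perfect (in $W$) if $\{v\otimes v\}_{v\in\mathcal P}$ spans the $\binom{n+1}{2}$-dimensional space of all symmetric tensors in $W\otimes W$. *)

theory Defs
  imports Main "HOL.Vector_Spaces" "HOL-Library.Function_Algebras"
begin

text \<open>Model: the finite-dimensional K-vector space V is K^n, realised as functions
  'n \<Rightarrow> 'a with 'n a finite index type; V \<otimes> V is realised as K^(n\<times>n),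
  i.e. functions ('n \<times> 'n) \<Rightarrow> 'a, with v \<otimes> w = (\<lambda>(i,j). v i * w j).\<close>

definition fscale :: "'a::field \<Rightarrow> ('i \<Rightarrow> 'a) \<Rightarrow> ('i \<Rightarrow> 'a)" where
  "fscale c v = (\<lambda>i. c * v i)"

definition tensor :: "('n \<Rightarrow> 'a::field) \<Rightarrow> ('n \<Rightarrow> 'a) \<Rightarrow> ('n \<times> 'n \<Rightarrow> 'a)" where
  "tensor v w = (\<lambda>(i, j). v i * w j)"

definition sym_tensors :: "('n \<Rightarrow> 'a::field) set \<Rightarrow> ('n \<times> 'n \<Rightarrow> 'a) set" where
  "sym_tensors W =
     {T \<in> module.span fscale {tensor w w' | w w'. w \<in> W \<and> w' \<in> W}.
        \<forall>i j. T (i, j) = T (j, i)}"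

definition perfect_in :: "('n \<Rightarrow> 'a::field) set \<Rightarrow> ('n \<Rightarrow> 'a) set \<Rightarrow> bool" where
  "perfect_in W P \<longleftrightarrow> P \<subseteq> W \<and> module.span fscale ((\<lambda>v. tensor v v) ` P) = sym_tensors W"

definition hyperplane :: "('n::finite \<Rightarrow> 'a::field) set \<Rightarrow> bool" where
  "hyperplane H \<longleftrightarrow> module.subspace fscale H \<and> vector_space.dim fscale H = card (UNIV :: 'n set) - 1"

end

theory Submission imports Defs begin

lemma vs_fscale: "vector_space (fscale :: 'a::field \<Rightarrow> ('i\<Rightarrow>'a) \<Rightarrow> _)"
  by unfold_locales (simp_all add: fscale_def fun_eq_iff algebra_simps)

interpretation V: vector_space "fscale :: 'a::field \<Rightarrow> ('i\<Rightarrow>'a) \<Rightarrow> _"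
  by (rule vs_fscale)

lemma sum_fun_apply: "(sum f A) x = sum (\<lambda>a. f a x) A"
  by (induction A rule: infinite_finite_induct) auto

definition ebas :: "'i \<Rightarrow> 'i \<Rightarrow> 'a::field" where "ebas i = (\<lambda>j. if j = i then 1 else 0)"

lemma ebas_inj: "inj ebas"
  by (auto simp: inj_def ebas_def fun_eq_iff)

lemma fd_fscale: "finite_dimensional_vector_space (fscale :: 'a::field \<Rightarrow> ('i::finite\<Rightarrow>'a) \<Rightarrow> _) (range ebas)"
proof unfold_locales
  show "finite (range (ebas :: 'i \<Rightarrow> 'i \<Rightarrow> 'a))" by simp
  show "V.independent (range (ebas :: 'i \<Rightarrow> 'i \<Rightarrow> 'a))"
  proof (rule V.independent_if_scalars_zero)
    fix c :: "('i \<Rightarrow> 'a) \<Rightarrow> 'a" and v assume h: "(\<Sum>v\<in>range ebas. fscale (c v) v) = 0" and v: "v \<in> range (ebas :: 'i \<Rightarrow> 'i \<Rightarrow> 'a)"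
    then obtain i where i: "v = ebas i" by auto
    have "(\<Sum>v\<in>range ebas. fscale (c v) v) i = (\<Sum>j\<in>UNIV. fscale (c (ebas j)) (ebas j)) i"
      by (simp add: sum.reindex[OF ebas_inj])
    also have "\<dots> = (\<Sum>j\<in>UNIV. if i = j then c (ebas j) else 0)"
      unfolding sum_fun_apply by (intro sum.cong refl) (simp add: fscale_def ebas_def)
    also have "\<dots> = c (ebas i)" by simp
    finally show "c v = 0" using h i by simp
  qed simp
  show "V.span (range (ebas :: 'i \<Rightarrow> 'i \<Rightarrow> 'a)) = UNIV"
  proof (intro set_eqI iffI UNIV_I)
    fix x :: "'i \<Rightarrow> 'a"
    have "x = (\<Sum>j\<in>UNIV. fscale (x j) (ebas j))"
      by (rule ext) (simp add: sum_fun_apply fscale_def ebas_def if_distrib[where f="times _"] cong: if_cong)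
    also have "\<dots> \<in> V.span (range ebas)"
      by (intro V.span_sum V.span_scale V.span_base) auto
    finally show "x \<in> V.span (range ebas)" .
  qed
qed

interpretation FV: finite_dimensional_vector_space "fscale :: 'a::field \<Rightarrow> ('i::finite\<Rightarrow>'a) \<Rightarrow> _" "range ebas"
  by (rule fd_fscale)


lemma tensor_add_left: "tensor (a + b) c = tensor a c + tensor b c"
  by (simp add: tensor_def fun_eq_iff algebra_simps)
lemma tensor_add_right: "tensor c (a + b) = tensor c a + tensor c b"
  by (simp add: tensor_def fun_eq_iff algebra_simps)
lemma tensor_scale_left: "tensor (fscale k a) c = fscale k (tensor a c)"
  by (simp add: tensor_def fscale_def fun_eq_iff algebra_simps)
lemma tensor_scale_right: "tensor c (fscale k a) = fscale k (tensor c a)"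
  by (simp add: tensor_def fscale_def fun_eq_iff algebra_simps)

lemma decomp_sq: "tensor (h + fscale k u) (h + fscale k u)
   = tensor h h + fscale k (tensor u h + tensor h u) + fscale (k*k) (tensor u u)"
  by (simp add: tensor_def fscale_def fun_eq_iff algebra_simps)

lemma polar: "tensor (a + b) (a + b) - tensor a a - tensor b b = tensor a b + tensor b a"
  by (simp add: tensor_def fun_eq_iff algebra_simps)

lemma dd: "(\<Sum>i\<in>(UNIV::'i::finite set). \<Sum>j\<in>(UNIV::'i set). if a = i \<and> b = j then f i j else 0) = (f a b :: 'b::comm_monoid_add)"
proof -
  have "(\<Sum>j\<in>(UNIV::'i set). if a = i \<and> b = j then f i j else 0) = (if a = i then f i b else 0)" for i
    by (cases "a = i") simp_all
  then show ?thesis by simp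
qed

lemma pt: "(fscale c (tensor (ebas i) (ebas j) + tensor (ebas j) (ebas i))) (a, b)
   = (if a = i \<and> b = j then c else 0) + (if b = i \<and> a = j then (c::'a::field) else 0)"
  unfolding fscale_def tensor_def ebas_def plus_fun_def
  by (cases "a = i"; cases "b = j"; cases "a = j"; cases "b = i") simp_all

lemma sym_expand:
  fixes T :: "'n::finite \<times> 'n \<Rightarrow> 'a::field"
  assumes "(2::'a) \<noteq> 0" "\<forall>i j. T (i, j) = T (j, i)"
  shows "T = (\<Sum>i\<in>UNIV. \<Sum>j\<in>UNIV. fscale (T (i,j) / 2) (tensor (ebas i) (ebas j) + tensor (ebas j) (ebas i)))"
proof (rule ext, clarify)
  fix a b
  have "(\<Sum>i\<in>UNIV. \<Sum>j\<in>UNIV. fscale (T (i,j) / 2) (tensor (ebas i) (ebas j) + tensor (ebas j) (ebas i))) (a,b)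
     = (\<Sum>i\<in>UNIV. \<Sum>j\<in>UNIV. (if a = i \<and> b = j then T (i,j) / 2 else 0) + (if b = i \<and> a = j then T (i,j) / 2 else 0))"
    unfolding sum_fun_apply pt ..
  also have "\<dots> = (\<Sum>i\<in>UNIV. \<Sum>j\<in>UNIV. (if a = i \<and> b = j then T (i,j) / 2 else 0)) + (\<Sum>i\<in>UNIV. \<Sum>j\<in>UNIV. (if b = i \<and> a = j then T (i,j) / 2 else 0))"
    by (simp only: sum.distrib)
  also have "\<dots> = T (a,b) / 2 + T (b,a) / 2"
    by (simp only: dd)
  also have "\<dots> = T (a,b)" using assms by (simp add: field_simps)
  finally show "T (a, b) = (\<Sum>i\<in>UNIV. \<Sum>j\<in>UNIV. fscale (T (i,j) / 2) (tensor (ebas i) (ebas j) + tensor (ebas j) (ebas i))) (a,b)" by simp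
qed

lemma dimension_eq: "card (range (ebas :: 'i::finite \<Rightarrow> 'i \<Rightarrow> 'a::field)) = card (UNIV :: 'i set)"
  by (simp add: card_image[OF ebas_inj])

theorem lemma2p1:
  fixes S H :: "('n::finite \<Rightarrow> 'a::field) set"
  assumes char: "(2::'a) \<noteq> 0"
    and hyp: "hyperplane H"
    and perf: "perfect_in H (S \<inter> H)"
    and spans: "module.span fscale (S - (S \<inter> H)) = UNIV"
  shows "perfect_in (UNIV :: ('n \<Rightarrow> 'a) set) S"
proof -
  define W where "W = V.span ((\<lambda>v. tensor v v) ` S)"
  have subH: "V.subspace H" and dimH: "V.dim H = card (UNIV :: 'n set) - 1"
    using hyp by (auto simp: hyperplane_def)
  have "S - H \<noteq> {}"
  proof
    assume "S - H = {}"
    then have "S - (S \<inter> H) = {}" by blast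
    then have "(UNIV :: ('n \<Rightarrow> 'a) set) = {0}" using spans V.span_empty by metis
    then have "(\<lambda>_. 1) = (0 :: 'n \<Rightarrow> 'a)" by blast
    then have "(1::'a) = 0" by (metis zero_fun_def)
    then show False by simp
  qed
  then obtain u where uS: "u \<in> S" and uH: "u \<notin> H" by auto
  have "V.dim (insert u H) = card (UNIV :: 'n set)"
    using uH subH dimH finite_UNIV_card_ge_0[where 'a='n] by (simp add: FV.dim_insert V.span_eq_iff[THEN iffD2, OF subH])
  then have spanUH: "V.span (insert u H) = UNIV"
    using FV.dim_eq_full[unfolded FV.dimension_def] dimension_eq by metis
  have dec: "\<exists>k h. h \<in> H \<and> x = h + fscale k u" for x
  proof -
    have "x \<in> V.span (insert u H)" using spanUH by simp
    then obtain k where "x - fscale k u \<in> V.span H" by (auto simp: V.span_breakdown_eq)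
    then have "x - fscale k u \<in> H" using V.span_eq_iff[THEN iffD2, OF subH] by simp
    then show ?thesis by (intro exI[of _ k] exI[of _ "x - fscale k u"]) simp
  qed
  have subW: "V.subspace W" unfolding W_def by simp
  have WH: "tensor h h \<in> W" if "h \<in> H" for h
  proof -
    have "tensor h h \<in> sym_tensors H"
      unfolding sym_tensors_def using that
      by (auto intro!: V.span_base simp: tensor_def mult.commute)
    also have "\<dots> = V.span ((\<lambda>v. tensor v v) ` (S \<inter> H))" using perf by (simp add: perfect_in_def)
    also have "\<dots> \<subseteq> W" unfolding W_def by (intro V.span_mono) auto
    finally show ?thesis .
  qed
  have Wu: "tensor u u \<in> W" unfolding W_def using uS by (auto intro: V.span_base)
  have WS: "tensor s s \<in> W" if "s \<in> S" for s unfolding W_def using that by (auto intro: V.span_base)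
  define N where "N = {x. tensor u x + tensor x u \<in> W}"
  have subN: "V.subspace N"
    unfolding V.subspace_def N_def
  proof (intro conjI ballI allI; clarsimp?)
    have "tensor u 0 + tensor 0 u = 0" by (rule ext) (auto simp: tensor_def)
    then show "tensor u 0 + tensor 0 u \<in> W" using V.subspace_0[OF subW] by simp
  next
    fix x y assume "tensor u x + tensor x u \<in> W" "tensor u y + tensor y u \<in> W"
    then have "(tensor u x + tensor x u) + (tensor u y + tensor y u) \<in> W" using V.subspace_add[OF subW] by blast
    then show "tensor u (x + y) + tensor (x + y) u \<in> W" by (simp add: tensor_add_left tensor_add_right algebra_simps)
  next
    fix c x assume "tensor u x + tensor x u \<in> W"
    then have "fscale c (tensor u x + tensor x u) \<in> W" using V.subspace_scale[OF subW] by blast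
    then show "tensor u (fscale c x) + tensor (fscale c x) u \<in> W"
      by (simp add: tensor_scale_left tensor_scale_right V.scale_right_distrib)
  qed
  have SN: "S - (S \<inter> H) \<subseteq> N"
  proof
    fix s assume s: "s \<in> S - (S \<inter> H)"
    obtain k h where h: "h \<in> H" and sd: "s = h + fscale k u" using dec by blast
    have k0: "k \<noteq> 0" using s h sd by (auto simp: fscale_def zero_fun_def[symmetric])
    have "tensor s s - tensor h h - fscale (k*k) (tensor u u) \<in> W"
      using WS[of s] WH[OF h] Wu s subW by (intro V.subspace_diff V.subspace_scale) auto
    then have "fscale k (tensor u h + tensor h u) \<in> W" unfolding sd decomp_sq by simp
    then have "fscale (inverse k) (fscale k (tensor u h + tensor h u)) \<in> W" using subW V.subspace_scale by blast
    then have A: "tensor u h + tensor h u \<in> W" using k0 by (simp add: V.scale_scale)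
    have "(tensor u h + tensor h u) + fscale (2*k) (tensor u u) \<in> W"
      using V.subspace_add[OF subW A V.subspace_scale[OF subW Wu]] by simp
    moreover have "(tensor u h + tensor h u) + fscale (2*k) (tensor u u) = tensor u s + tensor s u"
      unfolding sd by (simp add: tensor_def fscale_def fun_eq_iff algebra_simps)
    ultimately show "s \<in> N" unfolding N_def by simp
  qed
  have NU: "N = UNIV" using V.span_minimal[OF SN subN] spans by auto
  have allsq: "tensor x x \<in> W" for x
  proof -
    obtain k h where h: "h \<in> H" and xd: "x = h + fscale k u" using dec by blast
    have "tensor u h + tensor h u \<in> W" using NU unfolding N_def by blast
    then have "tensor h h + fscale k (tensor u h + tensor h u) + fscale (k*k) (tensor u u) \<in> W"
      using V.subspace_add[OF subW V.subspace_add[OF subW WH[OF h] V.subspace_scale[OF subW]] V.subspace_scale[OF subW Wu]] by blast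
    then show ?thesis unfolding xd decomp_sq .
  qed
  have cross: "tensor a b + tensor b a \<in> W" for a b
  proof -
    have "tensor (a + b) (a + b) - tensor a a - tensor b b \<in> W"
      using allsq subW by (intro V.subspace_diff) auto
    then show ?thesis by (simp add: polar)
  qed
  have symT: "V.subspace {T :: 'n \<times> 'n \<Rightarrow> 'a. \<forall>i j. T (i, j) = T (j, i)}"
    unfolding V.subspace_def
  proof (intro conjI ballI allI; clarify?)
    fix x y :: "'n \<times> 'n \<Rightarrow> 'a" and i j
    assume x: "\<forall>i j. x (i, j) = x (j, i)" and y: "\<forall>i j. y (i, j) = y (j, i)"
    show "(x + y) (i, j) = (x + y) (j, i)" unfolding plus_fun_def using x y by metis
  next
    fix c and x :: "'n \<times> 'n \<Rightarrow> 'a" and i j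
    assume x: "\<forall>i j. x (i, j) = x (j, i)"
    show "fscale c x (i, j) = fscale c x (j, i)" unfolding fscale_def using x by metis
  qed simp
  have symsub: "V.subspace (sym_tensors (UNIV :: ('n \<Rightarrow> 'a) set))"
  proof -
    have eq: "sym_tensors (UNIV :: ('n \<Rightarrow> 'a) set) = V.span {tensor w w' | w w'. w \<in> (UNIV :: ('n \<Rightarrow> 'a) set) \<and> w' \<in> UNIV} \<inter> {T :: 'n \<times> 'n \<Rightarrow> 'a. \<forall>i j. T (i, j) = T (j, i)}"
      unfolding sym_tensors_def by blast
    show ?thesis unfolding eq by (rule V.subspace_inter[OF V.subspace_span symT])
  qed
  show ?thesis
    unfolding perfect_in_def
  proof (intro conjI subset_UNIV equalityI)
    show "V.span ((\<lambda>v. tensor v v) ` S) \<subseteq> sym_tensors UNIV"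
    proof (intro V.span_minimal symsub image_subsetI)
      fix v assume "v \<in> S"
      have "tensor v v \<in> V.span {tensor w w' | w w'. w \<in> (UNIV :: ('n \<Rightarrow> 'a) set) \<and> w' \<in> UNIV}"
        by (rule V.span_base) blast
      moreover have "\<forall>i j. tensor v v (i, j) = tensor v v (j, i)" by (simp add: tensor_def mult.commute)
      ultimately show "tensor v v \<in> sym_tensors UNIV" unfolding sym_tensors_def by blast
    qed
    show "sym_tensors UNIV \<subseteq> V.span ((\<lambda>v. tensor v v) ` S)"
    proof
      fix T assume "T \<in> sym_tensors (UNIV :: ('n \<Rightarrow> 'a) set)"
      then have sT: "\<forall>i j. T (i, j) = T (j, i)" unfolding sym_tensors_def by blast
      have "(\<Sum>i\<in>UNIV. \<Sum>j\<in>UNIV. fscale (T (i,j) / 2) (tensor (ebas i) (ebas j) + tensor (ebas j) (ebas i))) \<in> W"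
        using cross subW by (intro V.subspace_sum V.subspace_scale) auto
      moreover have eqT: "T = (\<Sum>i\<in>UNIV. \<Sum>j\<in>UNIV. fscale (T (i,j) / 2) (tensor (ebas i) (ebas j) + tensor (ebas j) (ebas i)))"
        by (rule sym_expand[OF char sT])
      ultimately show "T \<in> V.span ((\<lambda>v. tensor v v) ` S)" unfolding W_def by (subst eqT) assumption
    qed
  qed
qed

end
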